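(* Let $f(z)=\sum_{k\ge0}a_kz^k$ be an entire transcendental function, let $a_{n_0}$ be its first nonzero coefficient, let $M(r)=\max_{\theta}|f(re^{i\theta})|$, and for $n>n_0$ let $r_\diamond(n)=\operatorname{argmin}_{r>0}r^{-n}M(r)$ (the unique minimizer). Then $r_\diamond(n)\le r_\diamond(n+1)$ for $n>n_0$, and $\lim_{n\to\infty}r_\diamond(n)=\infty$. *)

theory Defs
  imports "HOL-Complex_Analysis.Complex_Analysis"
begin

definition max_modulus :: "(complex \<Rightarrow> complex) \<Rightarrow> real \<Rightarrow> real" where
  "max_modulus f r = (SUP \<theta>\<in>UNIV. cmod (f (of_real r * exp (\<i> * of_real \<theta>))))"

definition r_diamond :: "(complex \<Rightarrow> complex) \<Rightarrow> nat \<Rightarrow> real" where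
  "r_diamond f n = (THE r. r > 0 \<and>
      (\<forall>s>0. max_modulus f r / r ^ n \<le> max_modulus f s / s ^ n))"

end

theory Submission
  imports Defs
begin

lemma mm_sphere:
  assumes "r \<ge> 0"
  shows "max_modulus f r = Sup ((\<lambda>z. cmod (f z)) ` sphere 0 r)"
proof -
  let ?h = "\<lambda>\<theta>::real. of_real r * exp (\<i> * of_real \<theta>)"
  have rng: "range ?h = sphere 0 r"
  proof
    show "range ?h \<subseteq> sphere 0 r" using assms by (auto simp: norm_mult)
    show "sphere 0 r \<subseteq> range ?h"
    proof
      fix z :: complex assume z: "z \<in> sphere 0 r"
      show "z \<in> range ?h"
      proof (cases "z = 0")
        case True
        then have "r = 0" using z by simp
        then show ?thesis using True by (auto intro: range_eqI[of _ _ 0])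
      next
        case False
        then have "z = ?h (Arg z)" using z Arg_eq[OF False] by simp
        then show ?thesis by blast
      qed
    qed
  qed
  have "(\<lambda>\<theta>. cmod (f (?h \<theta>))) ` UNIV = (\<lambda>z. cmod (f z)) ` range ?h"
    by (simp add: image_image)
  then show ?thesis unfolding max_modulus_def using rng by simp
qed

lemma mm_compact:
  fixes f :: "complex \<Rightarrow> complex"
  assumes "continuous_on UNIV f"
  shows "compact ((\<lambda>z. cmod (f z)) ` sphere 0 r)"
  by (intro compact_continuous_image continuous_on_norm continuous_on_subset[OF assms]) (simp_all add: compact_sphere)

lemma mm_upper:
  fixes f :: "complex \<Rightarrow> complex"
  assumes "continuous_on UNIV f" "norm z = r"
  shows "cmod (f z) \<le> max_modulus f r"
proof -
  have "r \<ge> 0" using assms(2) by auto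
  have "bdd_above ((\<lambda>z. cmod (f z)) ` sphere 0 r)"
    using mm_compact[OF assms(1), of r] by (meson bounded_imp_bdd_above compact_imp_bounded)
  then show ?thesis unfolding mm_sphere[OF \<open>r \<ge> 0\<close>]
    by (rule cSup_upper[rotated]) (use assms in auto)
qed

lemma mm_attained:
  fixes f :: "complex \<Rightarrow> complex"
  assumes "continuous_on UNIV f" "r \<ge> 0"
  shows "\<exists>z. norm z = r \<and> cmod (f z) = max_modulus f r"
proof -
  have ne: "(\<lambda>z. cmod (f z)) ` sphere 0 r \<noteq> {}" using assms(2)
    by (metis empty_iff image_is_empty norm_of_real real_norm_def abs_of_nonneg mem_sphere_0)
  obtain s where s: "s \<in> (\<lambda>z. cmod (f z)) ` sphere 0 r"
     "\<And>t. t \<in> (\<lambda>z. cmod (f z)) ` sphere 0 r \<Longrightarrow> t \<le> s"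
    using compact_attains_sup[OF mm_compact[OF assms(1)] ne] by blast
  then obtain z where z: "norm z = r" "s = cmod (f z)" by auto
  have "Sup ((\<lambda>z. cmod (f z)) ` sphere 0 r) = s"
    using s by (intro cSup_eq_maximum) auto
  then show ?thesis using z mm_sphere[OF assms(2)] by auto
qed

lemma mm_cont_aux:
  fixes f :: "complex \<Rightarrow> complex"
  assumes "continuous_on UNIV f" "r0 > 0" "e > 0"
  shows "\<exists>d>0. \<forall>r s. r > 0 \<and> s > 0 \<and> \<bar>r - r0\<bar> < d \<and> \<bar>s - r0\<bar> < d \<longrightarrow>
            max_modulus f r \<le> max_modulus f s + e"
proof -
  have "uniformly_continuous_on (cball 0 (r0 + 1)) f"
    by (intro compact_uniformly_continuous continuous_on_subset[OF assms(1)]) auto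
  then obtain d where d: "d > 0" "\<And>x x'. x \<in> cball 0 (r0+1) \<Longrightarrow> x' \<in> cball 0 (r0+1) \<Longrightarrow>
      dist x' x < d \<Longrightarrow> dist (f x') (f x) < e"
    unfolding uniformly_continuous_on_def using assms(3) by metis
  show ?thesis
  proof (intro exI[of _ "min (d/2) (1/2)"] conjI allI impI)
    show "min (d/2) (1/2) > 0" using d by simp
    fix r s :: real
    assume H: "r > 0 \<and> s > 0 \<and> \<bar>r - r0\<bar> < min (d/2) (1/2) \<and> \<bar>s - r0\<bar> < min (d/2) (1/2)"
    obtain z where z: "norm z = r" "cmod (f z) = max_modulus f r"
      using mm_attained[OF assms(1), of r] H by auto
    define z' where "z' = z * of_real (s / r)"
    have nz': "norm z' = s" using z H by (simp add: z'_def norm_mult del: of_real_divide)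
    have "dist z' z = norm (z * (of_real (s/r) - 1))" by (simp add: z'_def dist_norm algebra_simps)
    also have "\<dots> = r * norm (of_real (s / r - 1) :: complex)" using z
      by (simp add: norm_mult del: of_real_divide) 
    also have "\<dots> = r * \<bar>s / r - 1\<bar>" by (simp only: norm_of_real)
    also have "\<dots> = \<bar>s - r\<bar>" using H by (simp add: abs_mult[symmetric] field_simps)
    also have "\<dots> < d" using H by linarith
    finally have dz: "dist z' z < d" .
    have "norm z' \<le> r0 + 1" "norm z \<le> r0 + 1" using nz' z H by linarith+
    then have "dist (f z) (f z') < e"
      using d(2)[of z' z] dz by (simp add: dist_commute)
    then have "cmod (f z) \<le> cmod (f z') + e"
      using norm_triangle_ineq2[of "f z" "f z'"] by (simp add: dist_norm)
    also have "cmod (f z') \<le> max_modulus f s" by (rule mm_upper[OF assms(1) nz'])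
    finally show "max_modulus f r \<le> max_modulus f s + e" using z by simp
  qed
qed

lemma mm_cont:
  fixes f :: "complex \<Rightarrow> complex"
  assumes "continuous_on UNIV f"
  shows "continuous_on {0<..} (max_modulus f)"
  unfolding continuous_on_iff
proof (intro ballI allI impI)
  fix r0 e :: real assume r0: "r0 \<in> {0<..}" and e: "e > 0"
  obtain d where d: "d > 0" "\<And>r s. r > 0 \<and> s > 0 \<and> \<bar>r - r0\<bar> < d \<and> \<bar>s - r0\<bar> < d \<Longrightarrow>
            max_modulus f r \<le> max_modulus f s + e/2"
    using mm_cont_aux[OF assms, of r0 "e/2"] r0 e by auto
  show "\<exists>d>0. \<forall>x'\<in>{0<..}. dist x' r0 < d \<longrightarrow> dist (max_modulus f x') (max_modulus f r0) < e"
  proof (intro exI[of _ d] conjI ballI impI)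
    fix x assume "x \<in> {0<..}" "dist x r0 < d"
    then have "max_modulus f x \<le> max_modulus f r0 + e/2" "max_modulus f r0 \<le> max_modulus f x + e/2"
      using d(2)[of x r0] d(2)[of r0 x] r0 d(1) by (auto simp: dist_real_def)
    then show "dist (max_modulus f x) (max_modulus f r0) < e" using e by (simp add: dist_real_def)
  qed (use d in auto)
qed

lemma entire_facts:
  fixes f :: "complex \<Rightarrow> complex" and a :: "nat \<Rightarrow> complex"
  assumes series: "\<And>z. (\<lambda>k. a k * z ^ k) sums f z"
  shows "f holomorphic_on UNIV" "\<And>k. a k = (deriv ^^ k) f 0 / fact k"
proof -
  define F where "F = Abs_fps a"
  have rad: "fps_conv_radius F = \<infinity>"
    unfolding fps_conv_radius_def F_def using series
    by (intro conv_radius_inftyI'') (auto simp: sums_iff)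
  have ev: "eval_fps F = f"
    using series by (auto simp: eval_fps_def F_def fun_eq_iff sums_iff)
  show "f holomorphic_on UNIV" unfolding ev[symmetric]
    by (rule holomorphic_on_eval_fps) (simp add: rad)
  have "f has_fps_expansion F" unfolding ev[symmetric]
    by (rule eval_fps_has_fps_expansion) (simp add: rad)
  from fps_nth_fps_expansion[OF this] show "\<And>k. a k = (deriv ^^ k) f 0 / fact k"
    by (simp add: F_def)
qed

lemma coef_bound:
  fixes f :: "complex \<Rightarrow> complex" and a :: "nat \<Rightarrow> complex"
  assumes series: "\<And>z. (\<lambda>k. a k * z ^ k) sums f z" and r: "r > 0"
  shows "norm (a k) * r ^ k \<le> max_modulus f r"
proof -
  have hol: "f holomorphic_on UNIV" and co: "a k = (deriv ^^ k) f 0 / fact k"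
    using entire_facts[OF series] by auto
  have cont: "continuous_on UNIV f" using hol holomorphic_on_imp_continuous_on by blast
  have "norm ((deriv ^^ k) f 0) \<le> fact k * max_modulus f r / r ^ k"
  proof (rule Cauchy_inequality)
    show "f holomorphic_on ball 0 r" using hol by (rule holomorphic_on_subset) auto
    show "continuous_on (cball 0 r) f" using cont by (rule continuous_on_subset) auto
    show "0 < r" by fact
    fix x :: complex assume "norm (0 - x) = r"
    then have "norm x = r" by simp
    then show "norm (f x) \<le> max_modulus f r" by (rule mm_upper[OF cont])
  qed
  then have "norm (a k) \<le> max_modulus f r / r ^ k"
    unfolding co by (simp add: norm_divide field_simps)
  then show ?thesis using r by (simp add: field_simps)
qed

lemma infinitely_many_nz:
  fixes f :: "complex \<Rightarrow> complex" and a :: "nat \<Rightarrow> complex"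
  assumes series: "\<And>z. (\<lambda>k. a k * z ^ k) sums f z"
    and transcendental: "\<not> (\<exists>p. \<forall>z. f z = poly p z)"
  shows "\<exists>k>N. a k \<noteq> 0"
proof (rule ccontr)
  assume "\<not> (\<exists>k>N. a k \<noteq> 0)"
  then have z: "\<And>k. k \<notin> {..N} \<Longrightarrow> a k * w ^ k = 0" for w by auto
  have "\<forall>w. f w = poly (\<Sum>k\<le>N. monom (a k) k) w"
  proof
    fix w
    have "(\<lambda>k. a k * w ^ k) sums (\<Sum>k\<le>N. a k * w ^ k)"
      by (rule sums_finite) (use z in auto)
    then have "f w = (\<Sum>k\<le>N. a k * w ^ k)" using series[of w] sums_unique2 by blast
    then show "f w = poly (\<Sum>k\<le>N. monom (a k) k) w" by (simp add: poly_sum poly_monom)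
  qed
  then show False using transcendental by blast
qed

lemma unique_min_aux:
  fixes f :: "complex \<Rightarrow> complex" and a :: "nat \<Rightarrow> complex"
  assumes series: "\<And>z. (\<lambda>k. a k * z ^ k) sums f z"
    and transcendental: "\<not> (\<exists>p. \<forall>z. f z = poly p z)"
    and r1: "0 < r1" and r12: "r1 < r2"
    and min1: "\<And>s. s > 0 \<Longrightarrow> max_modulus f r1 / r1 ^ n \<le> max_modulus f s / s ^ n"
    and min2: "\<And>s. s > 0 \<Longrightarrow> max_modulus f r2 / r2 ^ n \<le> max_modulus f s / s ^ n"
  shows False
proof -
  have hol: "f holomorphic_on UNIV" using entire_facts[OF series] by auto
  have cont: "continuous_on UNIV f" using hol holomorphic_on_imp_continuous_on by blast
  define m where "m = max_modulus f r1 / r1 ^ n"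
  have r2: "0 < r2" using r1 r12 by linarith
  have m2: "max_modulus f r2 / r2 ^ n = m"
    using min1[OF r2] min2[OF r1] unfolding m_def by linarith
  define g where "g = (\<lambda>z. f z / z ^ n)"
  define A where "A = cball (0::complex) r2 - ball 0 r1"
  have clA: "closure A = A" unfolding A_def by (intro closure_closed) auto
  have intA: "interior A = ball 0 r2 - cball 0 r1" unfolding A_def
    using r1 by (simp add: interior_diff closure_ball)
  have onA: "\<And>w. w \<in> A \<Longrightarrow> w \<noteq> 0" unfolding A_def using r1 by auto
  have bound: "norm (g w) \<le> m" if w: "w \<in> A" for w
  proof (rule maximum_modulus_frontier[of g A m w])
    show "g holomorphic_on interior A" unfolding g_def intA
      by (intro holomorphic_intros holomorphic_on_subset[OF hol]) (use r1 in auto)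
    show "continuous_on (closure A) g" unfolding g_def clA
      by (intro continuous_intros continuous_on_subset[OF cont]) (use onA in auto)
    show "bounded A" unfolding A_def by (rule bounded_subset[OF bounded_cball]) auto
    show "w \<in> A" by fact
    fix z assume "z \<in> frontier A"
    then have zA: "z \<in> A" "z \<notin> interior A" unfolding frontier_def clA by auto
    then have "z \<notin> ball 0 r2 - cball 0 r1" using intA by simp
    then have nz: "norm z = r1 \<or> norm z = r2" using zA(1) unfolding A_def by auto
    have zpos: "norm z > 0" using nz r1 r2 by auto
    have "norm (g z) = norm (f z) / norm z ^ n" by (simp add: g_def norm_divide norm_power)
    also have "\<dots> \<le> max_modulus f (norm z) / norm z ^ n"
      by (intro divide_right_mono mm_upper[OF cont]) auto
    also have "\<dots> = m" using nz m2 m_def by auto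
    finally show "norm (g z) \<le> m" .
  qed
  define s where "s = (r1 + r2) / 2"
  have s: "r1 < s" "s < r2" using r12 by (auto simp: s_def)
  obtain z0 where z0: "norm z0 = s" "norm (f z0) = max_modulus f s"
    using mm_attained[OF cont, of s] s r1 by auto
  have z0A: "z0 \<in> A" using z0 s unfolding A_def by auto
  have "m \<le> max_modulus f s / s ^ n" using min1[of s] s r1 unfolding m_def by auto
  also have "\<dots> = norm (g z0)" using z0 by (simp add: g_def norm_divide norm_power)
  finally have gz0: "norm (g z0) = m" using bound[OF z0A] by linarith
  define U where "U = ball z0 ((r2 - r1) / 2)"
  have UA: "U \<subseteq> A"
  proof
    fix w assume "w \<in> U"
    then have "norm (w - z0) < (r2 - r1) / 2" unfolding U_def by (simp add: dist_norm norm_minus_commute)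
    moreover have "norm w \<le> norm z0 + norm (w - z0)" "norm z0 \<le> norm w + norm (w - z0)"
      using norm_triangle_ineq[of z0 "w - z0"] norm_triangle_ineq[of w "z0 - w"]
      by (auto simp: norm_minus_commute)
    ultimately have "norm w \<le> r2 \<and> r1 \<le> norm w" using z0(1) s_def by argo
    then show "w \<in> A" unfolding A_def by auto
  qed
  have "g constant_on U"
  proof (rule maximum_modulus_principle[of g U U z0])
    show "g holomorphic_on U" unfolding g_def
      by (intro holomorphic_intros holomorphic_on_subset[OF hol]) (use UA onA in auto)
    show "open U" "connected U" unfolding U_def by auto
    show "open U" "U \<subseteq> U" by (auto simp: U_def)
    show "z0 \<in> U" unfolding U_def using r12 by auto
    show "\<And>z. z \<in> U \<Longrightarrow> norm (g z) \<le> norm (g z0)" using gz0 bound UA by auto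
  qed
  then obtain c where c: "\<And>z. z \<in> U \<Longrightarrow> g z = c" unfolding constant_on_def by blast
  have "f z = c * z ^ n" for z
  proof (rule analytic_continuation_open[of U UNIV f "\<lambda>z. c * z ^ n"])
    show "open U" "U \<noteq> {}" unfolding U_def using r12 by auto
    show "(\<lambda>z. c * z ^ n) holomorphic_on UNIV" by (intro holomorphic_intros)
  next
    fix w assume "w \<in> U"
    then show "f w = c * w ^ n" using c[of w] onA[of w] UA by (auto simp: g_def field_simps)
  qed (use hol in auto)
  then have "\<forall>z. f z = poly (monom c n) z" by (simp add: poly_monom)
  then show False using transcendental by blast
qed

lemma unique_min:
  fixes f :: "complex \<Rightarrow> complex" and a :: "nat \<Rightarrow> complex"
  assumes series: "\<And>z. (\<lambda>k. a k * z ^ k) sums f z"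
    and transcendental: "\<not> (\<exists>p. \<forall>z. f z = poly p z)"
    and r1: "0 < r1" and r2: "0 < r2"
    and min1: "\<forall>s>0. max_modulus f r1 / r1 ^ n \<le> max_modulus f s / s ^ n"
    and min2: "\<forall>s>0. max_modulus f r2 / r2 ^ n \<le> max_modulus f s / s ^ n"
  shows "r1 = r2"
proof (rule linorder_cases[of r1 r2])
  assume "r1 < r2" then show ?thesis
    using unique_min_aux[OF series transcendental r1 _ ] min1 min2 by blast
next
  assume "r2 < r1" then show ?thesis
    using unique_min_aux[OF series transcendental r2 _ ] min1 min2 by blast
qed

lemma exists_min:
  fixes f :: "complex \<Rightarrow> complex" and a :: "nat \<Rightarrow> complex"
  assumes series: "\<And>z. (\<lambda>k. a k * z ^ k) sums f z"
    and transcendental: "\<not> (\<exists>p. \<forall>z. f z = poly p z)"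
    and n0: "a n0 \<noteq> 0" and nn0: "n0 < n"
  shows "\<exists>r>0. \<forall>s>0. max_modulus f r / r ^ n \<le> max_modulus f s / s ^ n"
proof -
  have hol: "f holomorphic_on UNIV" using entire_facts[OF series] by auto
  have cont: "continuous_on UNIV f" using hol holomorphic_on_imp_continuous_on by blast
  define \<phi> where "\<phi> = (\<lambda>r. max_modulus f r / r ^ n)"
  obtain k where k: "k > n" "a k \<noteq> 0" using infinitely_many_nz[OF series transcendental] by blast
  define a0 where "a0 = norm (a n0)"
  define ak where "ak = norm (a k)"
  have a0: "a0 > 0" and ak: "ak > 0" using n0 k by (auto simp: a0_def ak_def)
  have M1: "max_modulus f 1 \<ge> 0" using order_trans[OF norm_ge_zero mm_upper[OF cont, of 1 1]] by simp
  define \<alpha> where "\<alpha> = min 1 (a0 / (max_modulus f 1 + 1))"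
  define \<beta> where "\<beta> = max 1 ((max_modulus f 1 + 1) / ak)"
  have \<alpha>: "0 < \<alpha>" "\<alpha> \<le> 1" using a0 M1 by (auto simp: \<alpha>_def)
  have \<beta>: "1 \<le> \<beta>" by (simp add: \<beta>_def)
  have \<phi>1: "\<phi> 1 = max_modulus f 1" by (simp add: \<phi>_def)
  have low: "\<phi> r > \<phi> 1" if r: "0 < r" "r < \<alpha>" for r
  proof -
    have "a0 * r ^ n0 \<le> max_modulus f r" using coef_bound[OF series, of r n0] r by (simp add: a0_def)
    then have "a0 * r ^ n0 / r ^ n \<le> \<phi> r" unfolding \<phi>_def using r by (simp add: divide_right_mono)
    moreover have "a0 * r ^ n0 / r ^ n = a0 / r ^ (n - n0)"
      using r nn0 by (simp add: power_diff)
    moreover have "r ^ (n - n0) \<le> r ^ 1"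
      using r \<alpha> nn0 by (intro power_decreasing) auto
    then have "a0 / r \<le> a0 / r ^ (n - n0)" using r a0 by (intro divide_left_mono) auto
    moreover have "a0 / r > max_modulus f 1 + 1"
    proof -
      have "r < a0 / (max_modulus f 1 + 1)" using r by (simp add: \<alpha>_def)
      then show ?thesis using r M1 a0 by (simp add: field_simps)
    qed
    ultimately show ?thesis using \<phi>1 by linarith
  qed
  have high: "\<phi> r > \<phi> 1" if r: "r > \<beta>" for r
  proof -
    have rpos: "r > 0" "r \<ge> 1" using r \<beta> by auto
    have "ak * r ^ k \<le> max_modulus f r" using coef_bound[OF series, of r k] rpos by (simp add: ak_def)
    then have "ak * r ^ k / r ^ n \<le> \<phi> r" unfolding \<phi>_def using rpos by (simp add: divide_right_mono)
    moreover have "ak * r ^ k / r ^ n = ak * r ^ (k - n)"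
      using rpos k by (simp add: power_diff)
    moreover have "r ^ 1 \<le> r ^ (k - n)"
      using rpos k by (intro power_increasing) auto
    then have "ak * r \<le> ak * r ^ (k - n)" using ak by simp
    moreover have "ak * r > max_modulus f 1 + 1"
    proof -
      have "r > (max_modulus f 1 + 1) / ak" using r by (simp add: \<beta>_def)
      then show ?thesis using ak by (simp add: field_simps)
    qed
    ultimately show ?thesis using \<phi>1 by linarith
  qed
  have "continuous_on {\<alpha>..\<beta>} \<phi>" unfolding \<phi>_def
    by (intro continuous_intros continuous_on_subset[OF mm_cont[OF cont]]) (use \<alpha> in auto)
  then obtain r where r: "r \<in> {\<alpha>..\<beta>}" "\<And>y. y \<in> {\<alpha>..\<beta>} \<Longrightarrow> \<phi> r \<le> \<phi> y"
    using continuous_attains_inf[of "{\<alpha>..\<beta>}" \<phi>] \<alpha> \<beta> by auto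
  have "\<phi> r \<le> \<phi> 1" using r(2)[of 1] \<alpha> \<beta> by auto
  show ?thesis
  proof (intro exI[of _ r] conjI allI impI)
    show "r > 0" using r \<alpha> by auto
    fix s :: real assume "s > 0"
    show "max_modulus f r / r ^ n \<le> max_modulus f s / s ^ n"
    proof (cases "s \<in> {\<alpha>..\<beta>}")
      case True then show ?thesis using r(2) unfolding \<phi>_def by auto
    next
      case False
      then have "\<phi> s > \<phi> 1" using low[of s] high[of s] \<open>s > 0\<close> by auto
      then show ?thesis using \<open>\<phi> r \<le> \<phi> 1\<close> unfolding \<phi>_def by auto
    qed
  qed
qed

theorem theorem7p3:
  fixes f :: "complex \<Rightarrow> complex" and a :: "nat \<Rightarrow> complex"
  assumes series: "\<And>z. (\<lambda>k. a k * z ^ k) sums f z"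
    and transcendental: "\<not> (\<exists>p. \<forall>z. f z = poly p z)"
  shows "(\<forall>n. n > (LEAST k. a k \<noteq> 0) \<longrightarrow> r_diamond f n \<le> r_diamond f (Suc n))
         \<and> filterlim (r_diamond f) at_top sequentially"
proof -
  define n0 where "n0 = (LEAST k. a k \<noteq> 0)"
  have "\<exists>k. a k \<noteq> 0" using infinitely_many_nz[OF series transcendental, of 0] by blast
  then have an0: "a n0 \<noteq> 0" unfolding n0_def by (rule LeastI_ex)
  define rd where "rd = r_diamond f"
  have rd: "rd n > 0 \<and> (\<forall>s>0. max_modulus f (rd n) / (rd n) ^ n \<le> max_modulus f s / s ^ n)"
    if "n > n0" for n
  proof -
    have "\<exists>!r. r > 0 \<and> (\<forall>s>0. max_modulus f r / r ^ n \<le> max_modulus f s / s ^ n)"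
      using exists_min[OF series transcendental an0 that] unique_min[OF series transcendental]
      by blast
    then show ?thesis unfolding rd_def r_diamond_def by (rule theI')
  qed
  have lowb: "max_modulus f r \<ge> norm (a n0) * r ^ n0" if "r > 0" for r
    using coef_bound[OF series that] .
  have Mpos: "max_modulus f r > 0" if "r > 0" for r
  proof -
    have "norm (a n0) * r ^ n0 > 0" using an0 that by simp
    then show ?thesis using lowb[OF that] by linarith
  qed
  have mono: "rd n \<le> rd (Suc n)" if "n > n0" for n
  proof -
    define r where "r = rd n"
    define s where "s = rd (Suc n)"
    have r: "r > 0" and s: "s > 0" using rd[of n] rd[of "Suc n"] that by (auto simp: r_def s_def)
    have h1: "max_modulus f r / r ^ n \<le> max_modulus f s / s ^ n"
      using rd[of n] that s by (auto simp: r_def)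
    have h2: "max_modulus f s / s ^ Suc n \<le> max_modulus f r / r ^ Suc n"
      using rd[of "Suc n"] that r by (auto simp: s_def)
    have h1': "max_modulus f r * s ^ n \<le> max_modulus f s * r ^ n"
      using h1 r s by (simp add: field_simps)
    have h2': "max_modulus f s * r ^ n * r \<le> max_modulus f r * s ^ n * s"
      using h2 r s by (simp add: field_simps)
    also have "\<dots> \<le> max_modulus f s * r ^ n * s" using h1' s by (simp add: mult_right_mono)
    finally have "max_modulus f s * r ^ n * r \<le> max_modulus f s * r ^ n * s" .
    moreover have "max_modulus f s * r ^ n > 0" using Mpos[OF s] r by simp
    ultimately have "r \<le> s" by (simp add: mult_le_cancel_left_pos)
    then show ?thesis by (simp add: r_def s_def)
  qed
  have monoN: "rd m \<le> rd n" if "Suc n0 \<le> m" "m \<le> n" for m n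
    using that(2,1)
  proof (induction n rule: dec_induct)
    case base then show ?case by simp
  next
    case (step k) then show ?case using mono[of k] by simp
  qed
  define c where "c = rd (Suc n0)"
  have c: "c > 0" using rd[of "Suc n0"] by (simp add: c_def)
  have big: "\<exists>N>n0. Z \<le> rd N" for Z
  proof (rule ccontr)
    assume "\<not> (\<exists>N>n0. Z \<le> rd N)"
    then have lt: "\<And>N. N > n0 \<Longrightarrow> rd N < Z" by force
    have Z: "Z > c" using lt[of "Suc n0"] by (simp add: c_def)
    define R where "R = 2 * Z"
    have R: "R > 0" using Z c by (simp add: R_def)
    define K where "K = norm (a n0) * c ^ n0"
    have K: "K > 0" using an0 c by (simp add: K_def)
    obtain N where N: "max_modulus f R / K < 2 ^ N" using real_arch_pow[of 2] by auto
    define n where "n = Suc n0 + N"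
    define r where "r = rd n"
    have nn0: "n > n0" by (simp add: n_def)
    have r: "r > 0" "c \<le> r" "r < Z"
      using rd[OF nn0] monoN[of "Suc n0" n] lt[OF nn0] by (auto simp: r_def c_def n_def)
    have "max_modulus f r / r ^ n \<le> max_modulus f R / R ^ n" using rd[OF nn0] R by (simp add: r_def)
    then have "max_modulus f r \<le> max_modulus f R * (r / R) ^ n"
      using r R by (simp add: field_simps power_divide)
    also have "(r / R) ^ n \<le> (1/2) ^ n"
      using r R by (intro power_mono) (auto simp: R_def field_simps)
    then have "max_modulus f R * (r / R) ^ n \<le> max_modulus f R * (1/2) ^ n"
      using Mpos[OF R] by (simp add: mult_left_mono)
    also have "(1/2::real) ^ n \<le> (1/2) ^ N" by (intro power_decreasing) (auto simp: n_def)
    then have "max_modulus f R * (1/2) ^ n \<le> max_modulus f R * (1/2) ^ N"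
      using Mpos[OF R] by (simp add: mult_left_mono)
    also have "max_modulus f R * (1/2) ^ N < K"
      using N K by (simp add: field_simps power_divide)
    finally have "max_modulus f r < K" .
    moreover have "K \<le> norm (a n0) * r ^ n0"
      unfolding K_def using r c by (intro mult_left_mono power_mono) auto
    ultimately show False using lowb[OF r(1)] by linarith
  qed
  have "filterlim rd at_top sequentially"
    unfolding filterlim_at_top eventually_sequentially
  proof
    fix Z
    obtain N where "N > n0" "Z \<le> rd N" using big by blast
    then show "\<exists>N. \<forall>n\<ge>N. Z \<le> rd n" using monoN[of N] by (intro exI[of _ N]) force
  qed
  then show ?thesis using mono unfolding rd_def n0_def by blast
qed

end
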